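(* Let $W$ be a positive word. Let $S$ be a word in the letters $\sigma_1,\dots,\sigma_{n-1}$ only, of maximal length among such words for which $W\doteq ST$ for some positive word $T$. Suppose also that $W\doteq AV$ where $A$ is a word in the letters $\sigma_1,\dots,\sigma_{n-1}$ only and $V$ is a positive word. Then $S$ is left divisible by $A$, i.e. $S\doteq AU$ for some positive word $U$. Analogously for right division: if $S$ is a word in the $\sigma_i$ of maximal length with $W\doteq TS$ for some positive $T$, and $W\doteq VA$ with $A$ a word in the $\sigma_i$ and $V$ positive, then $S\doteq UA$ for some positive word $U$.
   Context: Fix $n\ge 2$. The positive singular braid monoid $SB_n^+$ is the monoid with generators $\sigma_1,\dots,\sigma_{n-1},x_1,\dots,x_{n-1}$ and relations: $\sigma_i\sigma_j=\sigma_j\sigma_i$ and $x_ix_j=x_jx_i$ if $|i-j|>1$; $x_i\sigma_j=\sigma_jx_i$ if $|i-j|\ne 1$; $\sigma_i\sigma_{i+1}\sigma_i=\sigma_{i+1}\sigma_i\sigma_{i+1}$; $\sigma_i\sigma_{i+1}x_i=x_{i+1}\sigma_i\sigma_{i+1}$; $\sigma_{i+1}\sigma_ix_{i+1}=x_i\sigma_{i+1}\sigma_i$. A positive word is a word in the letters $\sigma_i,x_i$. For positive words, $A\doteq B$ means they represent the same element of $SB_n^+$. *)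

theory Defs
  imports Main
begin

text \<open>Letters of the positive singular braid monoid: Sig i is sigma_i, X i is x_i
  (indices 1..n-1). Positive words are lists of letters.\<close>

datatype letter = Sig nat | X nat

type_synonym word = "letter list"

fun idx :: "letter \<Rightarrow> nat" where
  "idx (Sig i) = i" | "idx (X i) = i"

fun is_sig :: "letter \<Rightarrow> bool" where
  "is_sig (Sig i) = True" | "is_sig (X i) = False"

definition pos_word :: "nat \<Rightarrow> word \<Rightarrow> bool" where
  "pos_word n w \<longleftrightarrow> (\<forall>a\<in>set w. 1 \<le> idx a \<and> idx a \<le> n - 1)"

definition sigma_word :: "nat \<Rightarrow> word \<Rightarrow> bool" where
  "sigma_word n w \<longleftrightarrow> pos_word n w \<and> (\<forall>a\<in>set w. is_sig a)"

definition in_rng :: "nat \<Rightarrow> nat \<Rightarrow> bool" where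
  "in_rng n i \<longleftrightarrow> 1 \<le> i \<and> i \<le> n - 1"

inductive sb_rel :: "nat \<Rightarrow> word \<Rightarrow> word \<Rightarrow> bool" for n where
  ss: "\<lbrakk>in_rng n i; in_rng n j; i + 1 < j \<or> j + 1 < i\<rbrakk> \<Longrightarrow> sb_rel n [Sig i, Sig j] [Sig j, Sig i]"
| xx: "\<lbrakk>in_rng n i; in_rng n j; i + 1 < j \<or> j + 1 < i\<rbrakk> \<Longrightarrow> sb_rel n [X i, X j] [X j, X i]"
| xs: "\<lbrakk>in_rng n i; in_rng n j; i \<noteq> j + 1; j \<noteq> i + 1\<rbrakk> \<Longrightarrow> sb_rel n [X i, Sig j] [Sig j, X i]"
| braid: "\<lbrakk>in_rng n i; in_rng n (i+1)\<rbrakk> \<Longrightarrow> sb_rel n [Sig i, Sig (i+1), Sig i] [Sig (i+1), Sig i, Sig (i+1)]"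
| mix1: "\<lbrakk>in_rng n i; in_rng n (i+1)\<rbrakk> \<Longrightarrow> sb_rel n [Sig i, Sig (i+1), X i] [X (i+1), Sig i, Sig (i+1)]"
| mix2: "\<lbrakk>in_rng n i; in_rng n (i+1)\<rbrakk> \<Longrightarrow> sb_rel n [Sig (i+1), Sig i, X (i+1)] [X i, Sig (i+1), Sig i]"

inductive sb_eq :: "nat \<Rightarrow> word \<Rightarrow> word \<Rightarrow> bool" for n where
  step: "sb_rel n l r \<Longrightarrow> sb_eq n (u @ l @ v) (u @ r @ v)"
| refl: "sb_eq n w w"
| sym: "sb_eq n a b \<Longrightarrow> sb_eq n b a"
| trans: "sb_eq n a b \<Longrightarrow> sb_eq n b c \<Longrightarrow> sb_eq n a c"

end

theory Submission
  imports Defs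
begin


fun cpl :: "letter \<Rightarrow> letter \<Rightarrow> (word \<times> word) option" where
  "cpl (Sig i) (Sig j) = (if i = j then None else if j = i+1 \<or> i = j+1 then Some ([Sig j, Sig i],[Sig i, Sig j]) else Some ([Sig j],[Sig i]))"
| "cpl (X i) (X j) = (if i = j \<or> j = i+1 \<or> i = j+1 then None else Some ([X j],[X i]))"
| "cpl (X i) (Sig j) = (if j = i+1 \<or> i = j+1 then Some ([Sig j, Sig i],[Sig i, X j]) else Some ([Sig j],[X i]))"
| "cpl (Sig j) (X i) = (if j = i+1 \<or> i = j+1 then Some ([Sig i, X j],[Sig j, Sig i]) else Some ([X i],[Sig j]))"

datatype rres = Ok "word \<times> word" | Fail | NoFuel

fun rv :: "nat \<Rightarrow> word \<Rightarrow> word \<Rightarrow> rres" where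
  "rv 0 P Q = NoFuel"
| "rv (Suc k) [] Q = Ok (Q, [])"
| "rv (Suc k) (a#P) [] = Ok ([], a#P)"
| "rv (Suc k) (a#P) (b#Q) = (if a = b then rv k P Q else (case cpl a b of None \<Rightarrow> Fail | Some (p, q) \<Rightarrow>
     (case rv k P p of Ok (p', P'') \<Rightarrow> (case rv k Q (q @ P'') of Ok (X', Q'') \<Rightarrow> Ok (p' @ Q'', X') | r \<Rightarrow> r) | r \<Rightarrow> r)))"

definition cube_ok :: "letter \<Rightarrow> letter \<Rightarrow> letter \<Rightarrow> bool" where
 "cube_ok a b c = (case cpl a c of None \<Rightarrow> True | Some (p1, q1) \<Rightarrow> (case cpl c b of None \<Rightarrow> True | Some (p2, q2) \<Rightarrow>
   (case rv 20 q1 p2 of Fail \<Rightarrow> True | NoFuel \<Rightarrow> False | Ok (Q', P') \<Rightarrow> (case cpl a b of None \<Rightarrow> False | Some (p3, q3) \<Rightarrow>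
     (case (rv 20 p3 (p1 @ Q'), rv 20 q3 (q2 @ P')) of (Ok (R, []), Ok (R', [])) \<Rightarrow> rv 20 R R' = Ok ([],[]) | _ \<Rightarrow> False)))))"




definition C3 where "C3 i j k \<longleftrightarrow> (\<forall>a b c. a \<in> {Sig i, X i} \<longrightarrow> b \<in> {Sig j, X j} \<longrightarrow> c \<in> {Sig k, X k} \<longrightarrow> a\<noteq>b \<longrightarrow> a\<noteq>c \<longrightarrow> b\<noteq>c \<longrightarrow> cube_ok a b c)"

lemma sorted_gap:
  assumes "d1 = 0 \<or> d1 = 1 \<or> d1 = m1 + 2" "d2 = 0 \<or> d2 = 1 \<or> d2 = m2 + 2"
  shows "C3 p (p+d1) (p+d1+d2) \<and> C3 p (p+d1+d2) (p+d1) \<and> C3 (p+d1) p (p+d1+d2) \<and> C3 (p+d1) (p+d1+d2) p \<and> C3 (p+d1+d2) p (p+d1) \<and> C3 (p+d1+d2) (p+d1) p"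
  using assms unfolding C3_def cube_ok_def
  by (elim disjE; hypsubst; intro conjI allI impI; elim insertE emptyE; simp add: numeral_eq_Suc)


lemma gap_cases: "(x::nat) \<le> y \<Longrightarrow> \<exists>d m. y = x + d \<and> (d = 0 \<or> d = 1 \<or> d = m + 2)"
  by (rule exI[of _ "y - x"], rule exI[of _ "y - x - 2"]) auto

lemma sortedC: "p \<le> q \<Longrightarrow> q \<le> r \<Longrightarrow> C3 p q r \<and> C3 p r q \<and> C3 q p r \<and> C3 q r p \<and> C3 r p q \<and> C3 r q p"
proof -
  assume "p \<le> q" "q \<le> r"
  then obtain d1 m1 d2 m2 where "q = p + d1" "d1 = 0 \<or> d1 = 1 \<or> d1 = m1 + 2" "r = q + d2" "d2 = 0 \<or> d2 = 1 \<or> d2 = m2 + 2"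
    using gap_cases by meson
  then show ?thesis using sorted_gap[of d1 m1 d2 m2 p] by simp
qed

lemma C3_all: "C3 i j k"
  by (metis sortedC nat_le_linear)

lemma cube_all: "a \<noteq> b \<Longrightarrow> a \<noteq> c \<Longrightarrow> b \<noteq> c \<Longrightarrow> cube_ok a b c"
proof -
  assume "a \<noteq> b" "a \<noteq> c" "b \<noteq> c"
  moreover have "x \<in> {Sig (idx x), X (idx x)}" for x by (cases x) auto
  ultimately show ?thesis using C3_all[of "idx a" "idx b" "idx c"] unfolding C3_def by blast
qed

lemma cpl_sym: "cpl a b = Some (p,q) \<Longrightarrow> cpl b a = Some (q,p)"
  by (cases a; cases b; auto split: if_splits)
lemma cpl_neq: "cpl a b = Some pq \<Longrightarrow> a \<noteq> b"
  by (cases a; cases b; auto split: if_splits)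
lemma cpl_len: "cpl a b = Some (p,q) \<Longrightarrow> length p = length q"
  by (cases a; cases b; auto split: if_splits)
lemma cpl_idx: "cpl a b = Some (p,q) \<Longrightarrow> idx ` set (a#p) = idx ` set (b#q)"
  by (cases a; cases b; auto split: if_splits)
lemma cpl_sig: "cpl a b = Some (p,q) \<Longrightarrow> (\<forall>x\<in>set (a#p). is_sig x) = (\<forall>x\<in>set (b#q). is_sig x)"
  by (cases a; cases b; auto split: if_splits)
lemma cpl_SigSig: "cpl (Sig i) (Sig j) = Some (p,q) \<Longrightarrow> (\<forall>x\<in>set p. is_sig x) \<and> (\<forall>x\<in>set q. is_sig x)"
  by (auto split: if_splits)
lemma cpl_rev: "cpl a b = Some (p,q) \<Longrightarrow> \<exists>a' b' p' q'. cpl a' b' = Some (p',q') \<and> rev (a#p) = a'#p' \<and> rev (b#q) = b'#q'"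
  by (cases a; cases b; auto split: if_splits)

definition rel0 :: "word \<Rightarrow> word \<Rightarrow> bool" where
  "rel0 l r \<longleftrightarrow> (\<exists>a b p q. cpl a b = Some (p,q) \<and> l = a#p \<and> r = b#q)"

definition step1 :: "word \<Rightarrow> word \<Rightarrow> bool" where
  "step1 u v \<longleftrightarrow> (\<exists>x y l r. u = x@l@y \<and> v = x@r@y \<and> rel0 l r)"

abbreviation sbe :: "word \<Rightarrow> word \<Rightarrow> bool" where "sbe \<equiv> step1\<^sup>*\<^sup>*"

lemma rel0_sym: "rel0 l r \<Longrightarrow> rel0 r l"
  unfolding rel0_def using cpl_sym by blast
lemma step1_sym: "step1 u v \<Longrightarrow> step1 v u"
  unfolding step1_def using rel0_sym by blast
lemma sbe_sym: "sbe u v \<Longrightarrow> sbe v u"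
  by (induction rule: rtranclp_induct) (auto intro: converse_rtranclp_into_rtranclp step1_sym)
lemma sbe_trans: "sbe u v \<Longrightarrow> sbe v w \<Longrightarrow> sbe u w" by (rule rtranclp_trans)

lemma sbe_inv: "sbe u v \<Longrightarrow> length u = length v \<and> idx ` set u = idx ` set v \<and> (\<forall>x\<in>set u. is_sig x) = (\<forall>x\<in>set v. is_sig x)"
proof (induction rule: rtranclp_induct)
  case base then show ?case by simp
next
  case (step v w)
  then obtain x y l r a b p q where e: "v = x@l@y" "w = x@r@y" "cpl a b = Some (p,q)" "l = a#p" "r = b#q"
    unfolding step1_def rel0_def by blast
  have "length l = length r" using cpl_len[OF e(3)] e by simp
  moreover have "idx ` set l = idx ` set r" using cpl_idx[OF e(3)] e by simp
  moreover have "(\<forall>x\<in>set l. is_sig x) = (\<forall>x\<in>set r. is_sig x)" using cpl_sig[OF e(3)] e by simp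
  ultimately show ?case using step.IH e(1,2) by (auto simp: image_Un)
qed

lemma step1_ctx: "step1 u v \<Longrightarrow> step1 (x@u@y) (x@v@y)"
  unfolding step1_def by (metis append.assoc)
lemma sbe_ctx: "sbe u v \<Longrightarrow> sbe (x@u@y) (x@v@y)"
  by (induction rule: rtranclp_induct) (auto intro: rtranclp.rtrancl_into_rtrancl step1_ctx)
lemma sbe_cons: "sbe u v \<Longrightarrow> sbe (a#u) (a#v)"
  using sbe_ctx[of u v "[a]" "[]"] by simp
lemma sbe_appL: "sbe u v \<Longrightarrow> sbe (x@u) (x@v)"
  using sbe_ctx[of u v x "[]"] by simp
lemma sbe_appR: "sbe u v \<Longrightarrow> sbe (u@y) (v@y)"
  using sbe_ctx[of u v "[]" y] by simp
lemma sbe_rel: "cpl a b = Some (p,q) \<Longrightarrow> sbe (a#p@y) (b#q@y)"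
proof -
  assume "cpl a b = Some (p,q)"
  then have "step1 ([]@(a#p)@y) ([]@(b#q)@y)" unfolding step1_def rel0_def by blast
  then show ?thesis by simp
qed

lemma rel0_rev: "rel0 l r \<Longrightarrow> rel0 (rev l) (rev r)"
  unfolding rel0_def by (metis cpl_rev)
lemma step1_rev: "step1 u v \<Longrightarrow> step1 (rev u) (rev v)"
  unfolding step1_def using rel0_rev by (metis rev_append append.assoc)
lemma sbe_rev: "sbe u v \<Longrightarrow> sbe (rev u) (rev v)"
  by (induction rule: rtranclp_induct) (auto intro: rtranclp.rtrancl_into_rtrancl step1_rev)



lemma rel_cpl: "sb_rel n l r \<Longrightarrow> rel0 l r"
proof (induction rule: sb_rel.induct)
  case (ss i j) then show ?case unfolding rel0_def by (intro exI[of _ "Sig i"] exI[of _ "Sig j"]) auto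
next
  case (xx i j) then show ?case unfolding rel0_def by (intro exI[of _ "X i"] exI[of _ "X j"]) auto
next
  case (xs i j) then show ?case unfolding rel0_def by (intro exI[of _ "X i"] exI[of _ "Sig j"]) auto
next
  case (braid i) then show ?case unfolding rel0_def by (intro exI[of _ "Sig i"] exI[of _ "Sig (i+1)"]) auto
next
  case (mix1 i) then show ?case unfolding rel0_def by (intro exI[of _ "Sig i"] exI[of _ "X (i+1)"]) auto
next
  case (mix2 i) then show ?case unfolding rel0_def by (intro exI[of _ "Sig (i+1)"] exI[of _ "X i"]) auto
qed

lemma sb_eq_sbe: "sb_eq n u v \<Longrightarrow> sbe u v"
proof (induction rule: sb_eq.induct)
  case (step l r u v)
  then have "step1 (u@l@v) (u@r@v)" using rel_cpl unfolding step1_def by blast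
  then show ?case by simp
qed (auto intro: sbe_sym sbe_trans)

lemma arith_h: "i \<noteq> j \<and> j \<noteq> Suc i \<and> i \<noteq> Suc j \<longrightarrow> Suc i < j \<or> Suc j < (i::nat)" by arith

lemma cpl_rel: "cpl a b = Some (p,q) \<Longrightarrow> \<forall>x\<in>set (a#p). in_rng n (idx x) \<Longrightarrow> sb_rel n (a#p) (b#q) \<or> sb_rel n (b#q) (a#p)"
proof (cases a; cases b)
  fix i j assume "cpl a b = Some (p,q)" "\<forall>x\<in>set (a#p). in_rng n (idx x)" "a = Sig i" "b = Sig j"
  then show ?thesis
    using sb_rel.ss[of n i j] sb_rel.braid[of n i] sb_rel.braid[of n j]
      arith_h[of i j]
    by (auto split: if_splits)
next
  fix i j assume "cpl a b = Some (p,q)" "\<forall>x\<in>set (a#p). in_rng n (idx x)" "a = X i" "b = X j"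
  then show ?thesis
    using sb_rel.xx[of n i j] arith_h[of i j]
    by (auto split: if_splits)
next
  fix i j assume "cpl a b = Some (p,q)" "\<forall>x\<in>set (a#p). in_rng n (idx x)" "a = X i" "b = Sig j"
  then show ?thesis
    using sb_rel.xs[of n i j] sb_rel.mix1[of n j] sb_rel.mix2[of n i]
    by (auto split: if_splits)
next
  fix i j assume "cpl a b = Some (p,q)" "\<forall>x\<in>set (a#p). in_rng n (idx x)" "a = Sig i" "b = X j"
  then show ?thesis
    using sb_rel.xs[of n j i] sb_rel.mix1[of n i] sb_rel.mix2[of n j]
    by (auto split: if_splits)
qed

lemma pos_word_rng: "pos_word n w \<longleftrightarrow> (\<forall>x\<in>set w. in_rng n (idx x))"
  unfolding pos_word_def in_rng_def by simp

lemma pos_word_sbe: "sbe u v \<Longrightarrow> pos_word n u \<Longrightarrow> pos_word n v"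
  using sbe_inv[of u v] unfolding pos_word_def by (metis (no_types, lifting) image_iff)

lemma sbe_sb_eq: "sbe u v \<Longrightarrow> pos_word n u \<Longrightarrow> sb_eq n u v"
proof (induction rule: rtranclp_induct)
  case base then show ?case by (simp add: sb_eq.refl)
next
  case (step v w)
  then have pv: "pos_word n v" using pos_word_sbe by blast
  from step(2) obtain x y a b p q where e: "v = x@(a#p)@y" "w = x@(b#q)@y" "cpl a b = Some (p,q)"
    unfolding step1_def rel0_def by blast
  have "\<forall>z\<in>set (a#p). in_rng n (idx z)" using pv e(1) unfolding pos_word_rng by auto
  then have "sb_rel n (a#p) (b#q) \<or> sb_rel n (b#q) (a#p)" using cpl_rel[OF e(3)] by blast
  then have "sb_eq n v w" unfolding e by (metis sb_eq.step sb_eq.sym)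
  then show ?case using step.IH step.prems by (metis sb_eq.trans)
qed

lemma rv_neq: "a \<noteq> b \<Longrightarrow> cpl a b = Some (p,q) \<Longrightarrow> rv (Suc k) (a#P) (b#Q) = Ok r \<Longrightarrow>
  \<exists>p' P2 X' Q2. rv k P p = Ok (p',P2) \<and> rv k Q (q@P2) = Ok (X',Q2) \<and> r = (p'@Q2, X')"
  by (auto split: rres.splits)

lemma rv_sound: "rv k P Q = Ok (R1,R2) \<Longrightarrow> sbe (P@R1) (Q@R2)"
proof (induction k P Q arbitrary: R1 R2 rule: rv.induct)
  case (4 k a P b Q)
  show ?case
  proof (cases "a = b")
    case True then show ?thesis using 4 by (auto intro: sbe_cons)
  next
    case False
    obtain p q where c: "cpl a b = Some (p,q)" using 4(4) False by (cases "cpl a b") auto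
    obtain p' P2 X' Q2 where r: "rv k P p = Ok (p',P2)" "rv k Q (q@P2) = Ok (X',Q2)" "(R1,R2) = (p'@Q2, X')"
      using rv_neq[OF False c 4(4)] by blast
    have h1: "sbe (P@p') (p@P2)" using 4(2)[OF False c HOL.refl] r(1) by auto
    have h2: "sbe (Q@X') (q@P2@Q2)" using 4(3)[OF False c HOL.refl r(1)] r by auto
    have "sbe (a#P@p'@Q2) (a#p@P2@Q2)" using sbe_cons[OF sbe_appR[OF h1, of Q2]] by simp
    also have "sbe \<dots> (b#q@P2@Q2)" using sbe_rel[OF c] by simp
    also have "sbe \<dots> (b#Q@X')" using sbe_cons[OF sbe_sym[OF h2]] by simp
    finally show ?thesis using r(3) by simp
  qed
qed auto



definition Phi :: "letter \<Rightarrow> word \<Rightarrow> letter \<Rightarrow> word \<Rightarrow> bool" where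
  "Phi a U b V \<longleftrightarrow> (a = b \<and> sbe U V) \<or> (a \<noteq> b \<and> (\<exists>p q Z. cpl a b = Some (p,q) \<and> sbe U (p@Z) \<and> sbe V (q@Z)))"

lemma step_Phi: "step1 (c#W) (b#V) \<Longrightarrow> Phi c W b V"
proof -
  assume "step1 (c#W) (b#V)"
  then obtain x y l r where e: "c#W = x@l@y" "b#V = x@r@y" "rel0 l r" unfolding step1_def by blast
  then obtain a' b' p q where r: "cpl a' b' = Some (p,q)" "l = a'#p" "r = b'#q" unfolding rel0_def by blast
  show ?thesis
  proof (cases x)
    case Nil
    then have "c = a'" "W = p@y" "b = b'" "V = q@y" using e r by auto
    then show ?thesis unfolding Phi_def using r(1) cpl_neq[OF r(1)] by blast
  next
    case (Cons x0 x')
    then have "c = b" "W = x'@l@y" "V = x'@r@y" using e by auto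
    then show ?thesis unfolding Phi_def using e(3) unfolding step1_def by blast
  qed
qed

lemma rv_self: "rv (Suc (length P)) P P = Ok ([],[])"
  by (induction P) auto

lemma Wlem:
  assumes KLs: "\<forall>a U b V. length U < N \<longrightarrow> sbe (a#U) (b#V) \<longrightarrow> Phi a U b V"
  shows "length (P@Z1) \<le> N \<Longrightarrow> sbe (P@Z1) (Q@Z2) \<Longrightarrow>
    (rv k P Q \<noteq> Fail) \<and> (\<forall>R1 R2. rv k P Q = Ok (R1,R2) \<longrightarrow> (\<exists>Z. sbe Z1 (R1@Z) \<and> sbe Z2 (R2@Z)))"
proof (induction k P Q arbitrary: Z1 Z2 rule: rv.induct)
  case (1 P Q) then show ?case by simp
next
  case (2 k Q) then show ?case by (auto intro: sbe_sym)
next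
  case (3 k a P) then show ?case by (auto intro!: exI[of _ Z1] sbe_sym)
next
  case (4 k a P b Q)
  have ph: "Phi a (P@Z1) b (Q@Z2)" using KLs 4(4,5) by auto
  show ?case
  proof (cases "a = b")
    case True
    then have "sbe (P@Z1) (Q@Z2)" using ph unfolding Phi_def by auto
    moreover have "length (P@Z1) \<le> N" using 4(4) by simp
    ultimately show ?thesis using 4(1)[OF True] True by simp
  next
    case False
    then obtain p q Y where c: "cpl a b = Some (p,q)" "sbe (P@Z1) (p@Y)" "sbe (Q@Z2) (q@Y)"
      using ph unfolding Phi_def by auto
    have l1: "length (P@Z1) \<le> N" using 4(4) by simp
    have IH1: "rv k P p \<noteq> Fail \<and> (\<forall>R1 R2. rv k P p = Ok (R1,R2) \<longrightarrow> (\<exists>Z. sbe Z1 (R1@Z) \<and> sbe Y (R2@Z)))"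
      using 4(2)[OF False c(1) HOL.refl l1 c(2)] .
    show ?thesis
    proof (cases "rv k P p")
      case NoFuel then show ?thesis using False c by simp
    next
      case Fail then show ?thesis using IH1 by simp
    next
      case (Ok pr)
      obtain p' P2 where pr: "pr = (p',P2)" by (cases pr)
      obtain Y1 where y1: "sbe Z1 (p'@Y1)" "sbe Y (P2@Y1)" using IH1 Ok pr by blast
      have e2: "sbe (Q@Z2) ((q@P2)@Y1)" using sbe_trans[OF c(3) sbe_appL[OF y1(2), of q]] by simp
      have l2: "length (Q@Z2) \<le> N" using l1 sbe_inv[OF 4(5)] by simp
      have IH2: "rv k Q (q@P2) \<noteq> Fail \<and> (\<forall>R1 R2. rv k Q (q@P2) = Ok (R1,R2) \<longrightarrow> (\<exists>Z. sbe Z2 (R1@Z) \<and> sbe Y1 (R2@Z)))"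
        using 4(3)[OF False c(1) HOL.refl Ok pr[symmetric] l2 e2] .
      show ?thesis
      proof (cases "rv k Q (q@P2)")
        case NoFuel then show ?thesis using False c Ok pr by simp
      next
        case Fail then show ?thesis using IH2 by simp
      next
        case (Ok qr)
        obtain X' Q2 where qr: "qr = (X',Q2)" by (cases qr)
        obtain Y2 where y2: "sbe Z2 (X'@Y2)" "sbe Y1 (Q2@Y2)" using IH2 Ok qr by blast
        have rr: "rv (Suc k) (a#P) (b#Q) = Ok (p'@Q2, X')" using False c Ok qr \<open>rv k P p = Ok pr\<close> pr by simp
        have "sbe Z1 ((p'@Q2)@Y2)" using sbe_trans[OF y1(1) sbe_appL[OF y2(2), of p']] by simp
        then show ?thesis using rr y2(1) by auto
      qed
    qed
  qed
qed



lemma Phi_trans: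
  assumes KLs: "\<forall>a U b V. length U < N \<longrightarrow> sbe (a#U) (b#V) \<longrightarrow> Phi a U b V"
    and N: "length W \<le> N"
    and h1: "Phi a U c W" and h2: "Phi c W b V"
  shows "Phi a U b V"
proof (cases "a = c")
  case True
  then have s: "sbe U W" using h1 unfolding Phi_def by auto
  show ?thesis using h2 True sbe_trans[OF s] unfolding Phi_def by blast
next
  case ac: False
  then obtain p1 q1 Z1 where c1: "cpl a c = Some (p1,q1)" "sbe U (p1@Z1)" "sbe W (q1@Z1)"
    using h1 unfolding Phi_def by auto
  show ?thesis
  proof (cases "c = b")
    case True
    then have "sbe W V" using h2 unfolding Phi_def by auto
    then show ?thesis unfolding Phi_def using True ac c1 sbe_trans[OF sbe_sym[OF \<open>sbe W V\<close>] c1(3)] by blast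
  next
    case cb: False
    then obtain p2 q2 Z2 where c2: "cpl c b = Some (p2,q2)" "sbe W (p2@Z2)" "sbe V (q2@Z2)"
      using h2 unfolding Phi_def by auto
    have e: "sbe (q1@Z1) (p2@Z2)" using sbe_trans[OF sbe_sym[OF c1(3)] c2(2)] .
    have lq: "length (q1@Z1) \<le> N" using N sbe_inv[OF c1(3)] by simp
    note W = Wlem[OF KLs lq e]
    show ?thesis
    proof (cases "a = b")
      case True
      have "cpl c a = Some (q1,p1)" using cpl_sym[OF c1(1)] .
      then have pq: "p2 = q1" "q2 = p1" using c2(1) True by auto
      have "rv (Suc (length q1)) q1 p2 = Ok ([],[])" using rv_self pq by simp
      then obtain Z where z: "sbe Z1 Z" "sbe Z2 Z" using W by fastforce
      have "sbe U (p1@Z)" using sbe_trans[OF c1(2) sbe_appL[OF z(1)]] .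
      moreover have "sbe V (p1@Z)" using sbe_trans[OF c2(3) sbe_appL[OF z(2)]] pq by simp
      ultimately show ?thesis unfolding Phi_def using True sbe_trans sbe_sym by blast
    next
      case ab: False
      have cube: "cube_ok a b c" using cube_all ab ac cb by blast
      show ?thesis
      proof (cases "rv 20 q1 p2")
        case NoFuel then show ?thesis using cube c1(1) c2(1) unfolding cube_ok_def by simp
      next
        case Fail then show ?thesis using W by simp
      next
        case (Ok r)
        obtain Q' P' where r: "r = (Q',P')" by (cases r)
        obtain Z where z: "sbe Z1 (Q'@Z)" "sbe Z2 (P'@Z)" using W Ok r by blast
        obtain p3 q3 where c3: "cpl a b = Some (p3,q3)"
          using cube c1(1) c2(1) Ok r unfolding cube_ok_def by (cases "cpl a b") auto
        obtain R R' where rr: "rv 20 p3 (p1 @ Q') = Ok (R, [])" "rv 20 q3 (q2 @ P') = Ok (R', [])"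
            "rv 20 R R' = Ok ([],[])"
          using cube c1(1) c2(1) c3 Ok r unfolding cube_ok_def
          by (auto split: rres.splits list.splits)
        have s1: "sbe (p3@R) (p1@Q')" using rv_sound[OF rr(1)] by simp
        have s2: "sbe (q3@R') (q2@P')" using rv_sound[OF rr(2)] by simp
        have s3: "sbe R R'" using rv_sound[OF rr(3)] by simp
        have "sbe U (p3@R@Z)"
        proof -
          have "sbe U (p1@Q'@Z)" using sbe_trans[OF c1(2) sbe_appL[OF z(1)]] .
          also have "sbe \<dots> (p3@R@Z)" using sbe_appR[OF sbe_sym[OF s1], of Z] by simp
          finally show ?thesis .
        qed
        moreover have "sbe V (q3@R@Z)"
        proof -
          have "sbe V (q2@P'@Z)" using sbe_trans[OF c2(3) sbe_appL[OF z(2)]] .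
          also have "sbe \<dots> (q3@R'@Z)" using sbe_appR[OF sbe_sym[OF s2], of Z] by simp
          also have "sbe \<dots> (q3@R@Z)" using sbe_appL[OF sbe_appR[OF sbe_sym[OF s3]]] by simp
          finally show ?thesis .
        qed
        ultimately show ?thesis unfolding Phi_def using ab c3 by blast
      qed
    qed
  qed
qed

lemma KL: "sbe (a#U) (b#V) \<Longrightarrow> Phi a U b V"
proof (induction "length U" arbitrary: a U b V rule: less_induct)
  case less
  have KLs: "\<forall>a' U' b' V'. length U' < length U \<longrightarrow> sbe (a'#U') (b'#V') \<longrightarrow> Phi a' U' b' V'"
    using less.hyps by blast
  have "sbe (a#U) w \<Longrightarrow> \<forall>b V. w = b#V \<longrightarrow> Phi a U b V" for w
  proof (induction rule: rtranclp_induct)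
    case base then show ?case unfolding Phi_def by auto
  next
    case (step w w')
    show ?case
    proof (intro allI impI)
      fix b V assume w': "w' = b#V"
      have "length w = length w'" using sbe_inv[OF r_into_rtranclp[of step1, OF step(2)]] by simp
      then obtain c W where w: "w = c#W" using w' by (cases w) auto
      have "Phi a U c W" using step(3) w by blast
      moreover have "Phi c W b V" using step_Phi step(2) w w' by blast
      moreover have "length W \<le> length U" using sbe_inv[OF step(1)] w by simp
      ultimately show "Phi a U b V" using Phi_trans[OF KLs] by blast
    qed
  qed
  then show ?case using less.prems by blast
qed



definition allsig :: "word \<Rightarrow> bool" where "allsig w \<longleftrightarrow> (\<forall>x\<in>set w. is_sig x)"

definition MaxP :: "word \<Rightarrow> word \<Rightarrow> bool" where
  "MaxP W S \<longleftrightarrow> allsig S \<and> (\<exists>T. sbe W (S@T)) \<and> (\<forall>S' T'. allsig S' \<and> sbe W (S'@T') \<longrightarrow> length S' \<le> length S)"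

lemma allsig_sbe: "sbe u v \<Longrightarrow> allsig u = allsig v"
  using sbe_inv unfolding allsig_def by blast

lemma MaxP_tail:
  assumes "MaxP W (s#S')" "sbe W (s#W')" "sbe W' (S'@T)"
  shows "MaxP W' S'"
  unfolding MaxP_def
proof (intro conjI)
  show "allsig S'" using assms(1) unfolding MaxP_def allsig_def by simp
  show "\<exists>T. sbe W' (S'@T)" using assms(3) by blast
  show "\<forall>S'' T''. allsig S'' \<and> sbe W' (S''@T'') \<longrightarrow> length S'' \<le> length S'"
  proof (intro allI impI)
    fix S'' T'' assume h: "allsig S'' \<and> sbe W' (S''@T'')"
    have "sbe W ((s#S'')@T'')" using sbe_trans[OF assms(2) sbe_cons[OF conjunct2[OF h]]] by simp
    moreover have "allsig (s#S'')" using h assms(1) unfolding MaxP_def allsig_def by simp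
    ultimately have "length (s#S'') \<le> length (s#S')" using assms(1) unfolding MaxP_def by blast
    then show "length S'' \<le> length S'" by simp
  qed
qed

lemma core: "MaxP W S \<Longrightarrow> allsig A \<Longrightarrow> sbe W (A@V) \<Longrightarrow> \<exists>U. sbe S (A@U)"
proof (induction "length W" arbitrary: W S A V rule: less_induct)
  case less
  show ?case
  proof (cases A)
    case Nil then show ?thesis by auto
  next
    case (Cons a A')
    have asig: "is_sig a" "allsig A'" using less.prems(2) Cons unfolding allsig_def by auto
    have "allsig [a]" using asig unfolding allsig_def by simp
    moreover have "sbe W ([a]@A'@V)" using less.prems(3) Cons by simp
    ultimately have "length [a] \<le> length S" using less.prems(1) unfolding MaxP_def by blast
    then obtain s S' where S: "S = s#S'" by (cases S) auto
    obtain T where T: "sbe W (s#S'@T)" using less.prems(1) S unfolding MaxP_def by auto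
    have ssig: "is_sig s" using less.prems(1) S unfolding MaxP_def allsig_def by simp
    have WA: "sbe W (a#A'@V)" using less.prems(3) Cons by simp
    have ph: "Phi a (A'@V) s (S'@T)" using KL sbe_trans[OF sbe_sym[OF WA] T] by blast
    have mt: "MaxP (S'@T) S'" using MaxP_tail[OF less.prems(1)[unfolded S] T] by blast
    have lt: "length (S'@T) < length W" using sbe_inv[OF T] by simp
    show ?thesis
    proof (cases "a = s")
      case True
      then have "sbe (A'@V) (S'@T)" using ph unfolding Phi_def by auto
      then obtain U where "sbe S' (A'@U)" using less.hyps[OF lt mt asig(2) sbe_sym] by blast
      then show ?thesis using S Cons True sbe_cons by fastforce
    next
      case False
      then obtain p q Z where c: "cpl a s = Some (p,q)" "sbe (A'@V) (p@Z)" "sbe (S'@T) (q@Z)"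
        using ph unfolding Phi_def by auto
      obtain i j where ij: "a = Sig i" "s = Sig j" using asig(1) ssig by (cases a; cases s) auto
      have pq: "allsig p" "allsig q" using cpl_SigSig[of i j p q] c(1) ij unfolding allsig_def by auto
      obtain U where U: "sbe S' (q@U)" using less.hyps[OF lt mt pq(2) c(3)] by blast
      have SU: "sbe S (a#p@U)"
        using sbe_trans[OF sbe_cons[OF U] sbe_rel[OF cpl_sym[OF c(1)]]] S by simp
      define W2 where "W2 = p@U@T"
      have WW2: "sbe W (a#W2)"
      proof -
        have "sbe ((s#S')@T) ((a#p@U)@T)" using sbe_appR[OF SU[unfolded S], of T] .
        then show ?thesis using sbe_trans[OF T] unfolding W2_def by simp
      qed
      have sigpU: "allsig (p@U)" using allsig_sbe[OF SU] less.prems(1) unfolding MaxP_def allsig_def by simp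
      have m2: "MaxP W2 (p@U)"
        unfolding MaxP_def
      proof (intro conjI)
        show "allsig (p@U)" by (rule sigpU)
        show "\<exists>T'. sbe W2 ((p@U)@T')" unfolding W2_def by auto
        show "\<forall>S'' T''. allsig S'' \<and> sbe W2 (S''@T'') \<longrightarrow> length S'' \<le> length (p@U)"
        proof (intro allI impI)
          fix S'' T'' assume h: "allsig S'' \<and> sbe W2 (S''@T'')"
          have "sbe W ((a#S'')@T'')" using sbe_trans[OF WW2 sbe_cons[OF conjunct2[OF h]]] by simp
          moreover have "allsig (a#S'')" using h asig unfolding allsig_def by simp
          ultimately have "length (a#S'') \<le> length S" using less.prems(1) unfolding MaxP_def by blast
          then show "length S'' \<le> length (p@U)" using sbe_inv[OF SU] by simp
        qed
      qed
      have "Phi a W2 a (A'@V)" using KL sbe_trans[OF sbe_sym[OF WW2] WA] by blast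
      then have W2A: "sbe W2 (A'@V)" unfolding Phi_def by auto
      have lt2: "length W2 < length W" using sbe_inv[OF WW2] by simp
      obtain U' where "sbe (p@U) (A'@U')" using less.hyps[OF lt2 m2 asig(2) W2A] by blast
      then have "sbe S (a#A'@U')" using sbe_trans[OF SU sbe_cons] by blast
      then show ?thesis using Cons by auto
    qed
  qed
qed

lemma pos_app: "pos_word n (x@y) \<longleftrightarrow> pos_word n x \<and> pos_word n y"
  unfolding pos_word_def by auto
lemma pos_rev: "pos_word n (rev x) \<longleftrightarrow> pos_word n x"
  unfolding pos_word_def by auto
lemma sigma_allsig: "sigma_word n S \<longleftrightarrow> pos_word n S \<and> allsig S"
  unfolding sigma_word_def allsig_def by simp
lemma allsig_rev: "allsig (rev x) = allsig x" unfolding allsig_def by simp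

theorem proposition2p2:
  fixes n :: nat and W :: word
  assumes "n \<ge> 2" and "pos_word n W"
  shows
  "(\<forall>S A V.
      sigma_word n S
    \<and> (\<exists>T. pos_word n T \<and> sb_eq n W (S @ T))
    \<and> (\<forall>S' T'. sigma_word n S' \<and> pos_word n T' \<and> sb_eq n W (S' @ T') \<longrightarrow> length S' \<le> length S)
    \<and> sigma_word n A \<and> pos_word n V \<and> sb_eq n W (A @ V)
    \<longrightarrow> (\<exists>U. pos_word n U \<and> sb_eq n S (A @ U)))
 \<and> (\<forall>S A V.
      sigma_word n S
    \<and> (\<exists>T. pos_word n T \<and> sb_eq n W (T @ S))
    \<and> (\<forall>S' T'. sigma_word n S' \<and> pos_word n T' \<and> sb_eq n W (T' @ S') \<longrightarrow> length S' \<le> length S)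
    \<and> sigma_word n A \<and> pos_word n V \<and> sb_eq n W (V @ A)
    \<longrightarrow> (\<exists>U. pos_word n U \<and> sb_eq n S (U @ A)))"
proof (intro conjI allI impI)
  fix S A V
  assume h: "sigma_word n S
    \<and> (\<exists>T. pos_word n T \<and> sb_eq n W (S @ T))
    \<and> (\<forall>S' T'. sigma_word n S' \<and> pos_word n T' \<and> sb_eq n W (S' @ T') \<longrightarrow> length S' \<le> length S)
    \<and> sigma_word n A \<and> pos_word n V \<and> sb_eq n W (A @ V)"
  have m: "MaxP W S" unfolding MaxP_def
  proof (intro conjI)
    show "allsig S" using h sigma_allsig by blast
    show "\<exists>T. sbe W (S@T)" using h sb_eq_sbe by blast
    show "\<forall>S' T'. allsig S' \<and> sbe W (S'@T') \<longrightarrow> length S' \<le> length S"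
    proof (intro allI impI)
      fix S' T' assume h2: "allsig S' \<and> sbe W (S'@T')"
      have "pos_word n (S'@T')" using pos_word_sbe h2 assms(2) by blast
      moreover have "sb_eq n W (S'@T')" using sbe_sb_eq h2 assms(2) by blast
      ultimately show "length S' \<le> length S" using h h2 sigma_allsig pos_app by blast
    qed
  qed
  obtain U where U: "sbe S (A@U)" using core[OF m] h sigma_allsig sb_eq_sbe by blast
  have pS: "pos_word n S" using h sigma_allsig by blast
  have "pos_word n U" using pos_word_sbe[OF U pS] pos_app by blast
  moreover have "sb_eq n S (A@U)" using sbe_sb_eq[OF U pS] .
  ultimately show "\<exists>U. pos_word n U \<and> sb_eq n S (A @ U)" by blast
next
  fix S A V
  assume h: "sigma_word n S
    \<and> (\<exists>T. pos_word n T \<and> sb_eq n W (T @ S))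
    \<and> (\<forall>S' T'. sigma_word n S' \<and> pos_word n T' \<and> sb_eq n W (T' @ S') \<longrightarrow> length S' \<le> length S)
    \<and> sigma_word n A \<and> pos_word n V \<and> sb_eq n W (V @ A)"
  have m: "MaxP (rev W) (rev S)" unfolding MaxP_def
  proof (intro conjI)
    show "allsig (rev S)" using h sigma_allsig allsig_rev by blast
    obtain T where "sbe W (T@S)" using h sb_eq_sbe by blast
    then have "sbe (rev W) (rev S @ rev T)" using sbe_rev by fastforce
    then show "\<exists>T. sbe (rev W) (rev S@T)" by blast
    show "\<forall>S' T'. allsig S' \<and> sbe (rev W) (S'@T') \<longrightarrow> length S' \<le> length (rev S)"
    proof (intro allI impI)
      fix S' T' assume h2: "allsig S' \<and> sbe (rev W) (S'@T')"
      have r: "sbe W (rev T' @ rev S')" using sbe_rev[OF conjunct2[OF h2]] by simp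
      have "pos_word n (rev T' @ rev S')" using pos_word_sbe r assms(2) by blast
      moreover have "sb_eq n W (rev T' @ rev S')" using sbe_sb_eq r assms(2) by blast
      moreover have "allsig (rev S')" using h2 allsig_rev by blast
      ultimately have "length (rev S') \<le> length S" using h sigma_allsig pos_app by blast
      then show "length S' \<le> length (rev S)" by simp
    qed
  qed
  have "sbe W (V@A)" using h sb_eq_sbe by blast
  then have "sbe (rev W) (rev A @ rev V)" using sbe_rev by fastforce
  moreover have "allsig (rev A)" using h sigma_allsig allsig_rev by blast
  ultimately obtain U where U0: "sbe (rev S) (rev A @ U)" using core[OF m] by blast
  have U: "sbe S (rev U @ A)" using sbe_rev[OF U0] by simp
  have pS: "pos_word n S" using h sigma_allsig by blast
  have "pos_word n (rev U)" using pos_word_sbe[OF U pS] pos_app by blast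
  moreover have "sb_eq n S (rev U @ A)" using sbe_sb_eq[OF U pS] .
  ultimately show "\<exists>U. pos_word n U \<and> sb_eq n S (U @ A)" by blast
qed

end
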